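(* There is an absolute constant $C>0$ with the following property. Let $m\ge1$ and $\pi\in\mathcal P_{\le2}(m)$, and let $N^2_\pi(m)$ be the number of pairs $(\sigma,\tau)$ of commuting involutions in $\mathrm{Sym}_m$ such that $\sigma$ preserves $\pi$. Then \[ N^2_\pi(m)\le C^m(m!)^{\frac34-\frac{\pi_2}{2m}} . \]
   Context: $\mathcal P_{\le2}(m)$ is the set of set partitions of $\{1,\dots,m\}$ with all blocks of size at most $2$, and $\pi_2$ is the number of blocks of size $2$ of $\pi$. A permutation preserves $\pi$ if it maps blocks of $\pi$ to blocks of $\pi$. Involutions are elements $\sigma$ with $\sigma^2=1$ (the identity included). *)

theory Defs
  imports "HOL-Analysis.Analysis" "HOL-Library.Disjoint_Sets" "HOL-Combinatorics.Permutations"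
begin

definition part_le2 :: "nat \<Rightarrow> nat set set set" where
  "part_le2 m = {P. partition_on {1..m} P \<and> (\<forall>B\<in>P. card B \<le> 2)}"

definition blocks2 :: "nat set set \<Rightarrow> nat" where
  "blocks2 P = card {B\<in>P. card B = 2}"

definition involution :: "(nat \<Rightarrow> nat) \<Rightarrow> bool" where
  "involution \<sigma> \<longleftrightarrow> \<sigma> \<circ> \<sigma> = id"

definition preserves :: "(nat \<Rightarrow> nat) \<Rightarrow> nat set set \<Rightarrow> bool" where
  "preserves \<sigma> P \<longleftrightarrow> (\<forall>B\<in>P. \<sigma> ` B \<in> P)"

definition N2 :: "nat \<Rightarrow> nat set set \<Rightarrow> nat" where
  "N2 m P = card {(\<sigma>, \<tau>). \<sigma> permutes {1..m} \<and> \<tau> permutes {1..m} \<and>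
      involution \<sigma> \<and> involution \<tau> \<and> \<sigma> \<circ> \<tau> = \<tau> \<circ> \<sigma> \<and> preserves \<sigma> P}"

end

theory Submission
  imports Defs
begin

definition pt :: "nat set set \<Rightarrow> nat \<Rightarrow> nat" where
  "pt P i = (THE j. j \<noteq> i \<and> {i,j} \<in> P)"

definition cs :: "nat set set \<Rightarrow> (nat \<Rightarrow> nat) \<Rightarrow> nat \<Rightarrow> nat" where
  "cs P s i = (if s i = i then 1 else if {i} \<notin> P \<and> s i = pt P i then 2
     else if i < s i \<and> ({i} \<in> P \<or> (i < pt P i \<and> i < s (pt P i))) then s i + 3 else 0)"

lemma cs1: "cs P s i = 1 \<longleftrightarrow> s i = i"
  unfolding cs_def by auto
lemma cs2: "cs P s i = 2 \<Longrightarrow> s i = pt P i"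
  unfolding cs_def by (auto split: if_splits)
lemma cs3: "cs P s i = v + 3 \<Longrightarrow> s i = v"
  unfolding cs_def by (auto split: if_splits)
lemma cs_fwd: "s i \<noteq> i \<Longrightarrow> \<not>({i} \<notin> P \<and> s i = pt P i) \<Longrightarrow>
   i < s i \<Longrightarrow> ({i} \<in> P \<or> (i < pt P i \<and> i < s (pt P i))) \<Longrightarrow> cs P s i = s i + 3"
  unfolding cs_def by auto

locale PL =
  fixes m :: nat and P :: "nat set set"
  assumes P: "P \<in> part_le2 m"
begin

lemma partP: "partition_on {1..m} P" and cardP: "\<And>B. B \<in> P \<Longrightarrow> card B \<le> 2"
  using P by (auto simp: part_le2_def)

lemma blk_unique: "B \<in> P \<Longrightarrow> B' \<in> P \<Longrightarrow> x \<in> B \<Longrightarrow> x \<in> B' \<Longrightarrow> B = B'"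
  using partP unfolding partition_on_def disjoint_def by blast

lemma blk_sub: "B \<in> P \<Longrightarrow> B \<subseteq> {1..m}"
  using partP unfolding partition_on_def by blast

lemma cover: "i \<in> {1..m} \<Longrightarrow> \<exists>B\<in>P. i \<in> B"
  using partP unfolding partition_on_def by blast

lemma finP: "finite P"
proof -
  have "P \<subseteq> Pow {1..m}" using blk_sub by blast
  thus ?thesis using finite_subset by blast
qed

lemma exists_partner:
  assumes i: "i \<in> {1..m}" and ns: "{i} \<notin> P"
  shows "\<exists>j. j \<noteq> i \<and> {i,j} \<in> P"
proof -
  obtain B where B: "B \<in> P" "i \<in> B" using cover[OF i] by blast
  have fB: "finite B" using blk_sub[OF B(1)] finite_subset by blast
  have "B \<noteq> {i}" using B ns by auto
  then obtain j where j: "j \<in> B" "j \<noteq> i" using B by blast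
  have "B = {i,j}"
  proof (rule ccontr)
    assume "B \<noteq> {i,j}"
    then obtain l where l: "l \<in> B" "l \<noteq> i" "l \<noteq> j" using B j by blast
    have "{i,j,l} \<subseteq> B" using B j l by blast
    hence "card {i,j,l} \<le> card B" using fB card_mono by blast
    moreover have "card {i,j,l} = 3" using j l by auto
    ultimately show False using cardP[OF B(1)] by simp
  qed
  thus ?thesis using B j by blast
qed

lemma pt_unique: "{i,j} \<in> P \<Longrightarrow> j \<noteq> i \<Longrightarrow> pt P i = j"
  unfolding pt_def
proof (rule the_equality)
  assume "{i,j} \<in> P" "j \<noteq> i"
  thus "j \<noteq> i \<and> {i, j} \<in> P" by simp
next
  fix k assume a: "{i,j} \<in> P" "j \<noteq> i" "k \<noteq> i \<and> {i, k} \<in> P"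
  hence "{i,j} = {i,k}" using blk_unique[of "{i,j}" "{i,k}" i] by auto
  thus "k = j" using a by (auto simp: doubleton_eq_iff)
qed

lemma pt_prop:
  assumes i: "i \<in> {1..m}" and ns: "{i} \<notin> P"
  shows "pt P i \<noteq> i" "{i, pt P i} \<in> P"
  using exists_partner[OF assms] pt_unique by auto

lemma pair_not_single: "{i,j} \<in> P \<Longrightarrow> j \<noteq> i \<Longrightarrow> {i} \<notin> P"
  using blk_unique[of "{i,j}" "{i}" i] by auto

lemma pt_in: assumes "i \<in> {1..m}" "{i} \<notin> P"
  shows "pt P i \<in> {1..m}" "{pt P i} \<notin> P" "pt P (pt P i) = i"
proof -
  have a: "pt P i \<noteq> i" "{i, pt P i} \<in> P" using pt_prop[OF assms] by auto
  show "pt P i \<in> {1..m}" using blk_sub[OF a(2)] by auto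
  have b: "{pt P i, i} \<in> P" using a(2) by (simp add: insert_commute)
  show "{pt P i} \<notin> P" using pair_not_single[OF b] a(1) by auto
  show "pt P (pt P i) = i" using pt_unique[OF b] a(1) by auto
qed

lemma inv_app: "involution s \<Longrightarrow> s (s x) = x"
  unfolding involution_def by (metis comp_apply id_apply)

lemma perm_in: "s permutes {1..m} \<Longrightarrow> i \<in> {1..m} \<Longrightarrow> s i \<in> {1..m}"
  by (metis permutes_in_image)

lemma perm_out: "s permutes {1..m} \<Longrightarrow> i \<notin> {1..m} \<Longrightarrow> s i = i"
  by (simp add: permutes_not_in)

lemma perm_inj: "s permutes {1..m} \<Longrightarrow> s x = s y \<Longrightarrow> x = y"
  by (metis permutes_inj injD)

lemma single_pres:
  assumes "preserves s P" "{i} \<in> P" shows "{s i} \<in> P"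
  using assms unfolding preserves_def by force

lemma pair_pres:
  assumes s: "s permutes {1..m}" "preserves s P" and i: "i \<in> {1..m}" "{i} \<notin> P"
  shows "{s i} \<notin> P" "pt P (s i) = s (pt P i)"
proof -
  have a: "pt P i \<noteq> i" "{i, pt P i} \<in> P" using pt_prop[OF i] by auto
  have b: "{s i, s (pt P i)} \<in> P" using s(2) a(2) unfolding preserves_def by force
  have c: "s (pt P i) \<noteq> s i" using a(1) perm_inj[OF s(1)] by metis
  show "{s i} \<notin> P" using pair_not_single[OF b c] .
  show "pt P (s i) = s (pt P i)" using pt_unique[OF b c] .
qed

definition good where
  "good s \<longleftrightarrow> s permutes {1..m} \<and> involution s \<and> preserves s P"

lemma inj_cs:
  assumes g: "good s" "good s'" and eq: "\<And>i. i \<in> {1..m} \<Longrightarrow> cs P s i = cs P s' i"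
  shows "s = s'"
proof -
  have sp: "s permutes {1..m}" "involution s" "preserves s P" using g(1) good_def by auto
  have sp': "s' permutes {1..m}" "involution s'" "preserves s' P" using g(2) good_def by auto
  have A: "s' i = s i" if i: "i \<in> {1..m}" "{i} \<in> P" for i
  proof -
    consider "s i = i" | "i < s i" | "s i < i" by linarith
    thus ?thesis
    proof cases
      case 1 thus ?thesis using eq[OF i(1)] cs1 by metis
    next
      case 2
      have "cs P s i = s i + 3" using 2 i by (intro cs_fwd) auto
      thus ?thesis using eq[OF i(1)] cs3 by metis
    next
      case 3
      define y where "y = s i"
      have y: "y \<in> {1..m}" "{y} \<in> P" "s y = i" using perm_in[OF sp(1) i(1)] single_pres[OF sp(3) i(2)]
        inv_app[OF sp(2)] y_def by auto
      have "cs P s y = i + 3" using y 3 y_def by (intro cs_fwd[of s y, simplified y(3)]) auto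
      hence "s' y = i" using eq[OF y(1)] cs3 by metis
      hence "s' i = y" using inv_app[OF sp'(2)] by metis
      thus ?thesis using y_def by simp
    qed
  qed
  have B: "s' i = s i" if i: "i \<in> {1..m}" "{i} \<notin> P" "i < pt P i" for i
  proof -
    define p where "p = pt P i"
    have p: "p \<in> {1..m}" "{p} \<notin> P" "pt P p = i" "p \<noteq> i" using pt_in[OF i(1,2)] pt_prop[OF i(1,2)] p_def by auto
    show ?thesis
    proof (cases "s i = i")
      case True thus ?thesis using eq[OF i(1)] cs1 by metis
    next
      case ne: False
      show ?thesis
      proof (cases "s i = p")
        case True
        hence "cs P s i = 2" using ne i p_def unfolding cs_def by auto
        hence "cs P s' i = 2" using eq[OF i(1)] by simp
        thus ?thesis using cs2 True p_def by metis
      next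
        case np: False
        show ?thesis
        proof (cases "i < s i \<and> i < s p")
          case True
          have "cs P s i = s i + 3" using True ne np i p_def by (intro cs_fwd) auto
          thus ?thesis using eq[OF i(1)] cs3 by metis
        next
          case False
          have si: "s i \<in> {1..m}" "{s i} \<notin> P" "pt P (s i) = s p"
            using perm_in[OF sp(1) i(1)] pair_pres[OF sp(1,3) i(1,2)] p_def by auto
          have sp2: "s p \<in> {1..m}" "{s p} \<notin> P" "pt P (s p) = s i"
            using perm_in[OF sp(1) p(1)] pair_pres[OF sp(1,3) p(1,2)] p(3) by auto
          have spi: "s p \<noteq> i" using np inv_app[OF sp(2)] by metis
          have spp: "s p \<noteq> p"
          proof
            assume "s p = p"
            hence "pt P (s i) = p" using si by simp
            hence "s i = pt P p" using pt_in[OF si(1,2)] by metis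
            thus False using p ne by simp
          qed
          have neq: "s i \<noteq> s p" using perm_inj[OF sp(1)] p(4) by metis
          have ip: "i < p" using i p_def by simp
          consider "s i < s p" | "s p < s i" using neq by linarith
          thus ?thesis
          proof cases
            case 1
            define c where "c = s i"
            have ci: "c < i" using 1 False ne spi c_def by linarith
            have sc: "s c = i" using inv_app[OF sp(2)] c_def by simp
            have "cs P s c = i + 3"
            proof (rule cs_fwd[of s c, simplified sc])
              show "i \<noteq> c" using ci by simp
              show "\<not> ({c} \<notin> P \<and> i = pt P c)" using si c_def spi by auto
              show "c < i" by fact
              show "{c} \<in> P \<or> c < pt P c \<and> c < s (pt P c)"
                using si c_def 1 inv_app[OF sp(2), of p] ci ip by auto
            qed
            hence "s' c = i" using eq[OF si(1)[folded c_def]] cs3 by metis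
            hence "s' i = c" using inv_app[OF sp'(2)] by metis
            thus ?thesis using c_def by simp
          next
            case 2
            define c where "c = s p"
            have ci: "c < i" using 2 False spi c_def by linarith
            have sc: "s c = p" using inv_app[OF sp(2)] c_def by simp
            have "cs P s c = p + 3"
            proof (rule cs_fwd[of s c, simplified sc])
              show "p \<noteq> c" using spp c_def by simp
              show "\<not> ({c} \<notin> P \<and> p = pt P c)" using sp2 c_def np by auto
              show "c < p" using ci ip by simp
              show "{c} \<in> P \<or> c < pt P c \<and> c < s (pt P c)"
                using sp2 c_def 2 inv_app[OF sp(2), of i] ci by auto
            qed
            hence "s' c = p" using eq[OF sp2(1)[folded c_def]] cs3 by metis
            hence "s' p = c" using inv_app[OF sp'(2)] by metis
            hence "pt P (s' p) = pt P c" by simp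
            hence "s' i = pt P c" using pair_pres(2)[OF sp'(1,3) p(1,2)] p(3) by simp
            thus ?thesis using sp2 c_def by simp
          qed
        qed
      qed
    qed
  qed
  have C: "s' i = s i" if i: "i \<in> {1..m}" for i
  proof (cases "{i} \<in> P")
    case True thus ?thesis using A i by blast
  next
    case False
    have pp: "pt P i \<noteq> i" using pt_prop[OF i False] by simp
    show ?thesis
    proof (cases "i < pt P i")
      case True thus ?thesis using B i False by blast
    next
      case lt: False
      define p where "p = pt P i"
      have p: "p \<in> {1..m}" "{p} \<notin> P" "pt P p = i" using pt_in[OF i False] p_def by auto
      have "s' p = s p" using B[OF p(1,2)] p(3) lt pp p_def by simp
      thus ?thesis using pair_pres(2)[OF sp'(1,3) p(1,2)] pair_pres(2)[OF sp(1,3) p(1,2)] p(3) by simp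
    qed
  qed
  show ?thesis
  proof
    fix i show "s i = s' i"
      by (cases "i \<in> {1..m}") (use C perm_out[OF sp(1)] perm_out[OF sp'(1)] in auto)
  qed
qed

end

definition ct :: "(nat \<Rightarrow> nat) \<Rightarrow> (nat \<Rightarrow> nat) \<Rightarrow> nat \<Rightarrow> nat" where
  "ct s t i = (if t i = i then 1 else if s i = i then (if i < t i then t i + 3 else 0)
     else if s i < i then 0 else if t i = s i then 2
     else if i < t i \<and> i < s (t i) then t i + 3 else 0)"

lemma ct1: "ct s t i = 1 \<longleftrightarrow> t i = i"
  unfolding ct_def by auto
lemma ct2: "ct s t i = 2 \<Longrightarrow> t i = s i"
  unfolding ct_def by (auto split: if_splits)
lemma ct3: "ct s t i = v + 3 \<Longrightarrow> t i = v"
  unfolding ct_def by (auto split: if_splits)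

context PL begin

lemma inj_ct:
  assumes s: "s permutes {1..m}" "involution s"
    and t: "t permutes {1..m}" "involution t" "s \<circ> t = t \<circ> s"
    and t': "t' permutes {1..m}" "involution t'" "s \<circ> t' = t' \<circ> s"
    and eq: "\<And>i. i \<in> {1..m} \<Longrightarrow> ct s t i = ct s t' i"
  shows "t = t'"
proof -
  have ss: "\<And>x. s (s x) = x" using inv_app[OF s(2)] .
  have tt: "\<And>x. t (t x) = x" using inv_app[OF t(2)] .
  have tt': "\<And>x. t' (t' x) = x" using inv_app[OF t'(2)] .
  have st: "\<And>x. s (t x) = t (s x)" using t(3) by (metis comp_apply)
  have st': "\<And>x. s (t' x) = t' (s x)" using t'(3) by (metis comp_apply)
  have A: "t' i = t i" if i: "i \<in> {1..m}" "\<not> s i < i" for i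
  proof (cases "t i = i")
    case True thus ?thesis using eq[OF i(1)] ct1 by metis
  next
    case tne: False
    show ?thesis
    proof (cases "s i = i")
      case si: True
      show ?thesis
      proof (cases "i < t i")
        case True
        hence "ct s t i = t i + 3" using tne si unfolding ct_def by simp
        thus ?thesis using eq[OF i(1)] ct3 by metis
      next
        case False
        define y where "y = t i"
        have y: "y \<in> {1..m}" "s y = y" "t y = i" "y < i"
          using perm_in[OF t(1) i(1)] st[of i] si tt False tne y_def by auto
        have "ct s t y = i + 3" using y unfolding ct_def by auto
        hence "t' y = i" using eq[OF y(1)] ct3 by metis
        hence "t' i = y" using tt' by metis
        thus ?thesis using y_def by simp
      qed
    next
      case sne: False
      have isi: "i < s i" using sne i(2) by linarith
      show ?thesis
      proof (cases "t i = s i")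
        case True
        hence "ct s t i = 2" using tne sne isi unfolding ct_def by simp
        thus ?thesis using eq[OF i(1)] ct2 True by metis
      next
        case tns: False
        show ?thesis
        proof (cases "i < t i \<and> i < s (t i)")
          case True
          hence "ct s t i = t i + 3" using tne sne isi tns unfolding ct_def by simp
          thus ?thesis using eq[OF i(1)] ct3 by metis
        next
          case False
          define x where "x = t i"
          have x1: "x \<in> {1..m}" using perm_in[OF t(1) i(1)] x_def by simp
          have x: "x \<in> {1..m}" "s x \<in> {1..m}" "t x = i" "t (s x) = s i"
            using x1 perm_in[OF s(1) x1] tt st x_def by metis+
          have sx: "s x \<noteq> x"
          proof
            assume "s x = x"
            hence "t (s i) = t i" using st x_def by metis
            hence "s i = i" using perm_inj[OF t(1)] by metis
            thus False using sne by simp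
          qed
          have xi: "x \<noteq> i" "x \<noteq> s i" "s x \<noteq> i" "s x \<noteq> s i"
            using tne tns x_def ss by metis+
          consider "x < s x" | "s x < x" using sx by linarith
          thus ?thesis
          proof cases
            case 1
            have xl: "x < i" using False 1 xi x_def by (metis not_less_iff_gr_or_eq less_trans)
            have "ct s t x = i + 3" using x sx xi 1 xl isi unfolding ct_def by auto
            hence "t' x = i" using eq[OF x(1)] ct3 by metis
            hence "t' i = x" using tt' by metis
            thus ?thesis using x_def by simp
          next
            case 2
            define z where "z = s x"
            have zl: "z < i" using False 2 xi x_def z_def by (metis not_less_iff_gr_or_eq less_trans)
            have "ct s t z = s i + 3" using x sx xi 2 zl isi ss unfolding ct_def z_def by auto
            hence "t' z = s i" using eq[OF x(2)[folded z_def]] ct3 by metis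
            hence "t' (s i) = z" using tt' by metis
            hence "t' i = s z" using st'[of "s i"] ss by metis
            thus ?thesis using z_def ss x_def by simp
          qed
        qed
      qed
    qed
  qed
  have C: "t' i = t i" if i: "i \<in> {1..m}" for i
  proof (cases "s i < i")
    case False thus ?thesis using A i by blast
  next
    case True
    define j where "j = s i"
    have j: "j \<in> {1..m}" "\<not> s j < j" using perm_in[OF s(1) i] True ss j_def by auto
    have "t' j = t j" using A[OF j] .
    thus ?thesis using st st' ss j_def by metis
  qed
  show ?thesis
  proof
    fix i show "t i = t' i"
      by (cases "i \<in> {1..m}") (use C perm_out[OF t(1)] perm_out[OF t'(1)] in auto)
  qed
qed


lemma half:
  assumes "finite X" "A \<subseteq> X" "inj_on g A" "g ` A \<subseteq> X - A"
  shows "2 * card A \<le> card X"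
proof -
  have "card (A \<union> g ` A) = card A + card (g ` A)"
    using assms by (intro card_Un_disjoint) (auto intro: finite_subset)
  moreover have "card (g ` A) = card A" using card_image[OF assms(3)] .
  moreover have "card (A \<union> g ` A) \<le> card X" using assms by (intro card_mono) auto
  ultimately show ?thesis by simp
qed

lemma counting:
  assumes g: "good s" and t: "t permutes {1..m}" "involution t" "s \<circ> t = t \<circ> s"
  shows "4 * (card {i\<in>{1..m}. 3 \<le> cs P s i} + card {i\<in>{1..m}. 3 \<le> ct s t i})
     \<le> 3 * card {i\<in>{1..m}. {i} \<in> P} + 2 * card {i\<in>{1..m}. {i} \<notin> P}"
proof -
  have s: "s permutes {1..m}" "involution s" "preserves s P" using g good_def by auto
  have ss: "\<And>x. s (s x) = x" using inv_app[OF s(2)] .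
  have tt: "\<And>x. t (t x) = x" using inv_app[OF t(2)] .
  have st: "\<And>x. s (t x) = t (s x)" using t(3) by (metis comp_apply)
  define I where "I = {1..m::nat}"
  define S where "S = {i\<in>I. {i} \<in> P}"
  define Y where "Y = {i\<in>I. {i} \<notin> P}"
  define Fx where "Fx = {i\<in>I. s i = i}"
  define T where "T = {i\<in>I. i < s i}"
  define T' where "T' = {i\<in>I. s i < i}"
  define A1 where "A1 = {i\<in>I. t i \<noteq> i \<and> s i = i \<and> i < t i}"
  define A2 where "A2 = {i\<in>I. t i \<noteq> i \<and> i < s i \<and> t i \<noteq> s i \<and> i < t i \<and> i < s (t i)}"
  define A3 where "A3 = {i\<in>S. i < s i}"
  define Aj where "Aj = {i\<in>Y. s i \<noteq> pt P i \<and> i < s i \<and> i < pt P i \<and> i < s (pt P i)}"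
  have fin: "\<And>X. X \<subseteq> I \<Longrightarrow> finite X" using I_def finite_subset by blast
  have sI: "\<And>i. i \<in> I \<Longrightarrow> s i \<in> I" using perm_in[OF s(1)] I_def by simp
  have tI: "\<And>i. i \<in> I \<Longrightarrow> t i \<in> I" using perm_in[OF t(1)] I_def by simp
  have eqs: "{i\<in>{1..m}. 3 \<le> cs P s i} = A3 \<union> Aj"
    unfolding A3_def Aj_def S_def Y_def I_def cs_def by auto
  have eqt: "{i\<in>{1..m}. 3 \<le> ct s t i} = A1 \<union> A2"
    unfolding A1_def A2_def I_def ct_def by auto
  have c1: "card (A3 \<union> Aj) = card A3 + card Aj"
    by (rule card_Un_disjoint) (auto simp: A3_def Aj_def S_def Y_def intro!: fin)
  have c2: "card (A1 \<union> A2) = card A1 + card A2"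
    by (rule card_Un_disjoint) (auto simp: A1_def A2_def intro!: fin)
  have SY: "card S + card Y = m"
  proof -
    have "card (S \<union> Y) = card S + card Y"
      by (rule card_Un_disjoint) (auto simp: S_def Y_def intro!: fin)
    moreover have "S \<union> Y = I" unfolding S_def Y_def by auto
    ultimately show ?thesis using I_def by simp
  qed
  have FTT: "card Fx + card T + card T' = m"
  proof -
    have "card (Fx \<union> T) = card Fx + card T"
      by (rule card_Un_disjoint) (auto simp: Fx_def T_def intro!: fin)
    moreover have "card (Fx \<union> T \<union> T') = card (Fx \<union> T) + card T'"
      by (rule card_Un_disjoint) (auto simp: Fx_def T_def T'_def intro!: fin)
    moreover have "Fx \<union> T \<union> T' = I" unfolding Fx_def T_def T'_def by auto
    ultimately show ?thesis using I_def by simp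
  qed
  have TT: "card T' = card T"
  proof -
    have "s ` T = T'"
    proof
      show "s ` T \<subseteq> T'" unfolding T_def T'_def using sI ss by auto
      show "T' \<subseteq> s ` T"
      proof
        fix j assume j: "j \<in> T'"
        hence "s j \<in> T" unfolding T_def T'_def using sI ss by auto
        thus "j \<in> s ` T" using ss by (metis image_eqI)
      qed
    qed
    moreover have "inj_on s T" using perm_inj[OF s(1)] by (meson inj_onI)
    ultimately show ?thesis using card_image by metis
  qed
  have TY: "card T = card A3 + card {i\<in>T. i \<in> Y}"
  proof -
    have "T = A3 \<union> {i\<in>T. i \<in> Y}" unfolding T_def A3_def S_def Y_def by auto
    moreover have "card (A3 \<union> {i\<in>T. i \<in> Y}) = card A3 + card {i\<in>T. i \<in> Y}"
      by (rule card_Un_disjoint) (auto simp: T_def A3_def S_def Y_def intro!: fin)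
    ultimately show ?thesis by simp
  qed
  have h1: "2 * card A1 \<le> card Fx"
  proof (rule half[where g = t])
    show "finite Fx" unfolding Fx_def by (auto intro!: fin)
    show "A1 \<subseteq> Fx" unfolding A1_def Fx_def by auto
    show "inj_on t A1" using perm_inj[OF t(1)] by (meson inj_onI)
    show "t ` A1 \<subseteq> Fx - A1" unfolding A1_def Fx_def using tI tt st by auto
  qed
  have h3: "2 * card A3 \<le> card S"
  proof (rule half[where g = s])
    show "finite S" unfolding S_def by (auto intro!: fin)
    show "A3 \<subseteq> S" unfolding A3_def by auto
    show "inj_on s A3" using perm_inj[OF s(1)] by (meson inj_onI)
    show "s ` A3 \<subseteq> S - A3" unfolding A3_def S_def using sI ss single_pres[OF s(3)] by auto
  qed
  have h2: "2 * card A2 \<le> card T"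
  proof (rule half[where g = "\<lambda>i. min (t i) (s (t i))"])
    show "finite T" unfolding T_def by (auto intro!: fin)
    show "A2 \<subseteq> T" unfolding A2_def T_def by auto
    show "inj_on (\<lambda>i. min (t i) (s (t i))) A2"
    proof (rule inj_onI)
      fix i i' assume i: "i \<in> A2" "i' \<in> A2" and e: "min (t i) (s (t i)) = min (t i') (s (t i'))"
      define z where "z = min (t i) (s (t i))"
      have "t z = i \<or> t z = s i" unfolding z_def min_def using tt st by auto
      moreover have "t z = i' \<or> t z = s i'"
      proof -
        have "z = min (t i') (s (t i'))" using e z_def by simp
        thus ?thesis unfolding min_def using tt st by auto
      qed
      moreover have "i < s i" "i' < s i'" using i unfolding A2_def by auto
      ultimately show "i = i'" using ss by (metis less_asym)
    qed
    show "(\<lambda>i. min (t i) (s (t i))) ` A2 \<subseteq> T - A2"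
    proof
      fix z assume "z \<in> (\<lambda>i. min (t i) (s (t i))) ` A2"
      then obtain i where i: "i \<in> A2" and z: "z = min (t i) (s (t i))" by blast
      have iA: "i \<in> I" "i < s i" "i < t i" "i < s (t i)" "t i \<noteq> s i" using i unfolding A2_def by auto
      have sx: "s (t i) \<noteq> t i"
      proof
        assume "s (t i) = t i"
        hence "t (s i) = t i" using st by metis
        hence "s i = i" using perm_inj[OF t(1)] by metis
        thus False using iA by simp
      qed
      have zI: "z \<in> I" using z tI sI iA(1) by (simp add: min_def)
      have zT: "z < s z" using z sx ss by (auto simp: min_def)
      have "\<not> (z < t z \<and> z < s (t z))"
      proof -
        have "(t z = i \<and> s (t z) = s i) \<or> (t z = s i \<and> s (t z) = i)"
          using z tt st ss by (auto simp: min_def)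
        moreover have "i < z" using z iA by simp
        ultimately show ?thesis by auto
      qed
      thus "z \<in> T - A2" using zI zT unfolding T_def A2_def by auto
    qed
  qed
  have h4: "2 * card Aj \<le> card {i\<in>T. i \<in> Y}"
  proof (rule half[where g = "\<lambda>i. if s (pt P i) < pt P i then s (pt P i) else pt P i"])
    show "finite {i\<in>T. i \<in> Y}" unfolding T_def by (auto intro!: fin)
    show "Aj \<subseteq> {i\<in>T. i \<in> Y}" unfolding Aj_def T_def Y_def by auto
    have facts: "pt P i \<in> I \<and> pt P i \<in> Y \<and> pt P (pt P i) = i \<and> s (pt P i) \<in> Y \<and>
        pt P (s (pt P i)) = s i \<and> s (pt P i) \<noteq> pt P i"
      if i: "i \<in> Aj" for i
    proof -
      have iY: "i \<in> {1..m}" "{i} \<notin> P" using i unfolding Aj_def Y_def I_def by auto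
      have p: "pt P i \<in> {1..m}" "{pt P i} \<notin> P" "pt P (pt P i) = i" using pt_in[OF iY] by auto
      have q: "{s (pt P i)} \<notin> P" "pt P (s (pt P i)) = s i"
        using pair_pres[OF s(1,3) p(1,2)] p(3) by auto
      have si: "pt P (s i) = s (pt P i)" using pair_pres[OF s(1,3) iY] by auto
      have sp: "s (pt P i) \<noteq> pt P i"
      proof
        assume "s (pt P i) = pt P i"
        hence "pt P (s i) = pt P i" using si by simp
        hence "s i = i" using pt_in(3)[OF perm_in[OF s(1) iY(1)] pair_pres(1)[OF s(1,3) iY]] p(3) by metis
        thus False using i unfolding Aj_def by simp
      qed
      show ?thesis using p q sp perm_in[OF s(1) p(1)] unfolding Y_def I_def by auto
    qed
    show "inj_on (\<lambda>i. if s (pt P i) < pt P i then s (pt P i) else pt P i) Aj"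
    proof (rule inj_onI)
      fix i i' assume i: "i \<in> Aj" "i' \<in> Aj"
        and e: "(if s (pt P i) < pt P i then s (pt P i) else pt P i) =
                (if s (pt P i') < pt P i' then s (pt P i') else pt P i')"
      have fi: "pt P (pt P i) = i" "pt P (s (pt P i)) = s i" using facts[OF i(1)] by auto
      have fi': "pt P (pt P i') = i'" "pt P (s (pt P i')) = s i'" using facts[OF i(2)] by auto
      have lt: "i < s i" "i' < s i'" using i unfolding Aj_def by auto
      have sinj: "\<And>x y. s x = s y \<Longrightarrow> x = y" using perm_inj[OF s(1)] by metis
      show "i = i'"
      proof (cases "s (pt P i) < pt P i"; cases "s (pt P i') < pt P i'")
        assume "s (pt P i) < pt P i" "s (pt P i') < pt P i'"
        hence "pt P i = pt P i'" using e sinj by auto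
        thus ?thesis using fi fi' by metis
      next
        assume "\<not> s (pt P i) < pt P i" "\<not> s (pt P i') < pt P i'"
        hence "pt P i = pt P i'" using e by auto
        thus ?thesis using fi fi' by metis
      next
        assume "s (pt P i) < pt P i" "\<not> s (pt P i') < pt P i'"
        hence "s (pt P i) = pt P i'" using e by auto
        hence "s i = i'" using fi fi' by metis
        thus ?thesis using lt ss by (metis less_asym)
      next
        assume "\<not> s (pt P i) < pt P i" "s (pt P i') < pt P i'"
        hence "pt P i = s (pt P i')" using e by auto
        hence "s i' = i" using fi fi' by metis
        thus ?thesis using lt ss by (metis less_asym)
      qed
    qed
    show "(\<lambda>i. if s (pt P i) < pt P i then s (pt P i) else pt P i) ` Aj \<subseteq> {i\<in>T. i \<in> Y} - Aj"
    proof
      fix z assume "z \<in> (\<lambda>i. if s (pt P i) < pt P i then s (pt P i) else pt P i) ` Aj"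
      then obtain i where i: "i \<in> Aj" and z: "z = (if s (pt P i) < pt P i then s (pt P i) else pt P i)" by blast
      have f: "pt P i \<in> I" "pt P i \<in> Y" "pt P (pt P i) = i" "s (pt P i) \<in> Y"
        "pt P (s (pt P i)) = s i" "s (pt P i) \<noteq> pt P i" using facts[OF i] by auto
      have ia: "i < pt P i" "i < s (pt P i)" "i < s i" using i unfolding Aj_def by auto
      show "z \<in> {i\<in>T. i \<in> Y} - Aj"
      proof (cases "s (pt P i) < pt P i")
        case True
        hence zz: "z = s (pt P i)" using z by simp
        have "z \<in> T" using True zz ss f(4) unfolding T_def Y_def by auto
        moreover have "z \<notin> Aj" using zz f(5) ss ia unfolding Aj_def by auto
        ultimately show ?thesis using zz f(4) by auto
      next
        case False
        hence zz: "z = pt P i" using z by simp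
        have "z \<in> T" using False zz f(1,6) unfolding T_def by auto
        moreover have "z \<notin> Aj" using zz f(3) ia unfolding Aj_def by auto
        ultimately show ?thesis using zz f(2) by auto
      qed
    qed
  qed
  have fin_ineq: "4 * (card A3 + card Aj + (card A1 + card A2)) \<le> 3 * card S + 2 * card Y"
    using SY FTT TT TY h1 h2 h3 h4 by (simp add: algebra_simps; linarith)
  have SYe: "{i\<in>{1..m}. {i}\<in>P} = S" "{i\<in>{1..m}. {i}\<notin>P} = Y" by (simp_all add: S_def Y_def I_def)
  show ?thesis unfolding eqs eqt c1 c2 SYe using fin_ineq .
qed


lemma cardY: "card {i\<in>{1..m}. {i} \<notin> P} = 2 * blocks2 P"
proof -
  have e: "{i\<in>{1..m}. {i} \<notin> P} = \<Union>{B\<in>P. card B = 2}"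
  proof
    show "{i\<in>{1..m}. {i} \<notin> P} \<subseteq> \<Union>{B\<in>P. card B = 2}"
    proof
      fix i assume "i \<in> {i\<in>{1..m}. {i} \<notin> P}"
      hence i: "i \<in> {1..m}" "{i} \<notin> P" by auto
      have "pt P i \<noteq> i" "{i, pt P i} \<in> P" using pt_prop[OF i] by auto
      thus "i \<in> \<Union>{B\<in>P. card B = 2}" by force
    qed
    show "\<Union>{B\<in>P. card B = 2} \<subseteq> {i\<in>{1..m}. {i} \<notin> P}"
    proof
      fix i assume "i \<in> \<Union>{B\<in>P. card B = 2}"
      then obtain B where B: "B \<in> P" "card B = 2" "i \<in> B" by blast
      have "{i} \<notin> P"
      proof
        assume "{i} \<in> P"
        hence "B = {i}" using blk_unique[OF B(1), of "{i}" i] B(3) by simp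
        thus False using B(2) by simp
      qed
      thus "i \<in> {i\<in>{1..m}. {i} \<notin> P}" using blk_sub[OF B(1)] B(3) by auto
    qed
  qed
  have "card (\<Union>{B\<in>P. card B = 2}) = sum card {B\<in>P. card B = 2}"
  proof (rule card_Union_disjoint)
    show "pairwise disjnt {B \<in> P. card B = 2}"
      using partP unfolding partition_on_def by (auto intro: pairwise_subset)
    show "\<And>A. A \<in> {B \<in> P. card B = 2} \<Longrightarrow> finite A"
      using blk_sub finite_subset by blast
  qed
  also have "\<dots> = sum (\<lambda>_. 2) {B\<in>P. card B = 2}" by (rule sum.cong) auto
  also have "\<dots> = 2 * blocks2 P" unfolding blocks2_def by simp
  finally show ?thesis using e by simp
qed

end

definition om :: "nat \<Rightarrow> nat \<Rightarrow> real" where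
  "om m v = (if v < 3 then 1 else 1 / real m)"

lemma prod_om:
  assumes "finite I"
  shows "(\<Prod>i\<in>I. om m (f i)) = (1 / real m) ^ card {i\<in>I. 3 \<le> f i}"
proof -
  have "(\<Prod>i\<in>I. om m (f i)) = (\<Prod>i\<in>I. if 3 \<le> f i then 1 / real m else 1)"
    by (rule prod.cong) (auto simp: om_def)
  also have "\<dots> = (\<Prod>i\<in>{i\<in>I. 3 \<le> f i}. 1 / real m)"
    by (rule prod.inter_filter[OF assms, symmetric])
  finally show ?thesis by simp
qed

lemma sum_om:
  assumes "m \<ge> 1"
  shows "(\<Sum>v\<in>{0..m+3}. om m v) \<le> 8"
proof -
  have "(\<Sum>v\<in>{0..m+3}. om m v) \<le> (\<Sum>v\<in>{0..m+3}. (if v < 3 then 1 else 0) + 1 / real m)"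
    by (rule sum_mono) (auto simp: om_def)
  also have "\<dots> = (\<Sum>v\<in>{0..m+3}. (if v < 3 then 1 else 0)) + real (m+4) / real m"
    by (simp add: sum.distrib)
  also have "(\<Sum>v\<in>{0..m+3}. (if v < 3 then 1 else 0::real)) = real (card {v\<in>{0..m+3}. v < 3})"
    using sum.inter_filter[of "{0..m+3}" "\<lambda>_. 1::real" "\<lambda>v. v < 3", symmetric] by simp
  also have "{v\<in>{0..m+3}. v < 3} = {0..<3}" by auto
  also have "real (m+4) / real m \<le> 5" using assms by (simp add: field_simps)
  finally show ?thesis by simp
qed

lemma pow_fact: "(real n) ^ n \<le> exp (real n) * fact n"
proof -
  have s: "summable (\<lambda>k. real n ^ k /\<^sub>R fact k)" using exp_converges sums_summable by blast
  have "sum (\<lambda>k. real n ^ k /\<^sub>R fact k) {n} \<le> (\<Sum>k. real n ^ k /\<^sub>R fact k)"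
    by (rule sum_le_suminf[OF s]) auto
  also have "\<dots> = exp (real n)" using exp_converges sums_unique by metis
  finally have "real n ^ n / fact n \<le> exp (real n)" by (simp add: divide_inverse mult.commute)
  thus ?thesis by (simp add: field_simps)
qed



context PL begin

lemma cardYle: "2 * blocks2 P \<le> m"
proof -
  have "card {i\<in>{1..m}. {i} \<notin> P} \<le> card {1..m}" by (rule card_mono) auto
  thus ?thesis using cardY by simp
qed

lemma main_count:
  assumes m1: "m \<ge> 1"
  shows "real (N2 m P) \<le> 64 ^ m * real m powr ((3 * real m - 2 * real (blocks2 P)) / 4)"
proof -
  define I where "I = {1..m}"
  define V where "V = {0..m+3}"
  define Pairs where "Pairs = {(s, t). s permutes {1..m} \<and> t permutes {1..m} \<and>
      involution s \<and> involution t \<and> s \<circ> t = t \<circ> s \<and> preserves s P}"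
  define L where "L = (3 * real m - 2 * real (blocks2 P)) / 4"
  define enc where "enc = (\<lambda>(s, t). (restrict (cs P s) I, restrict (ct s t) I))"
  define w where "w = (\<lambda>h. \<Prod>i\<in>I. om m (h i))"
  define W where "W = (\<lambda>(h1, h2). w h1 * w h2)"
  have finI: "finite I" using I_def by simp
  have finP: "finite Pairs"
  proof -
    have "Pairs \<subseteq> {s. s permutes {1..m}} \<times> {s. s permutes {1..m}}" unfolding Pairs_def by auto
    thus ?thesis using finite_permutations[of "{1..m}"] finite_subset by blast
  qed
  have inj: "inj_on enc Pairs"
  proof (rule inj_onI)
    fix p q assume p: "p \<in> Pairs" and q: "q \<in> Pairs" and e: "enc p = enc q"
    obtain s t where pst: "p = (s, t)" by (cases p)
    obtain s' t' where qst: "q = (s', t')" by (cases q)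
    have P1: "s permutes {1..m}" "t permutes {1..m}" "involution s" "involution t" "s \<circ> t = t \<circ> s" "preserves s P"
      using p pst unfolding Pairs_def by auto
    have P2: "s' permutes {1..m}" "t' permutes {1..m}" "involution s'" "involution t'" "s' \<circ> t' = t' \<circ> s'" "preserves s' P"
      using q qst unfolding Pairs_def by auto
    have e1: "restrict (cs P s) I = restrict (cs P s') I" and e2: "restrict (ct s t) I = restrict (ct s' t') I"
      using e pst qst unfolding enc_def by auto
    have "s = s'"
    proof (rule inj_cs)
      show "good s" "good s'" using P1 P2 good_def by auto
      fix i assume "i \<in> {1..m}"
      thus "cs P s i = cs P s' i" using fun_cong[OF e1, of i] I_def by simp
    qed
    moreover have "t = t'"
    proof (rule inj_ct[of s])
      show "s permutes {1..m}" "involution s" "t permutes {1..m}" "involution t" "s \<circ> t = t \<circ> s"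
        using P1 by auto
      show "t' permutes {1..m}" "involution t'" "s \<circ> t' = t' \<circ> s" using P2 \<open>s = s'\<close> by auto
      fix i assume "i \<in> {1..m}"
      thus "ct s t i = ct s t' i" using fun_cong[OF e2, of i] I_def \<open>s = s'\<close> by simp
    qed
    ultimately show "p = q" using pst qst by simp
  qed
  have img: "enc ` Pairs \<subseteq> PiE I (\<lambda>_. V) \<times> PiE I (\<lambda>_. V)"
  proof
    fix h assume "h \<in> enc ` Pairs"
    then obtain s t where st: "(s, t) \<in> Pairs" "h = enc (s, t)" by auto
    have sp: "s permutes {1..m}" "t permutes {1..m}" using st unfolding Pairs_def by auto
    have "cs P s i \<in> V" if "i \<in> I" for i
      using perm_in[OF sp(1), of i] that unfolding cs_def V_def I_def by auto
    moreover have "ct s t i \<in> V" if "i \<in> I" for i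
      using perm_in[OF sp(2), of i] that unfolding ct_def V_def I_def by auto
    ultimately show "h \<in> PiE I (\<lambda>_. V) \<times> PiE I (\<lambda>_. V)" using st unfolding enc_def by auto
  qed
  have lower: "real m powr (- L) \<le> W (enc p)" if p: "p \<in> Pairs" for p
  proof -
    obtain s t where pst: "p = (s, t)" by (cases p)
    have P1: "s permutes {1..m}" "t permutes {1..m}" "involution s" "involution t" "s \<circ> t = t \<circ> s" "preserves s P"
      using p pst unfolding Pairs_def by auto
    define a where "a = card {i\<in>{1..m}. 3 \<le> cs P s i}"
    define b where "b = card {i\<in>{1..m}. 3 \<le> ct s t i}"
    have cnt: "4 * (a + b) \<le> 3 * card {i\<in>{1..m}. {i} \<in> P} + 2 * card {i\<in>{1..m}. {i} \<notin> P}"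
      unfolding a_def b_def by (rule counting) (use P1 good_def in auto)
    have SY: "card {i\<in>{1..m}. {i} \<in> P} + card {i\<in>{1..m}. {i} \<notin> P} = m"
    proof -
      have "card ({i\<in>{1..m}. {i} \<in> P} \<union> {i\<in>{1..m}. {i} \<notin> P}) =
          card {i\<in>{1..m}. {i} \<in> P} + card {i\<in>{1..m}. {i} \<notin> P}"
        by (rule card_Un_disjoint) auto
      moreover have "{i\<in>{1..m}. {i} \<in> P} \<union> {i\<in>{1..m}. {i} \<notin> P} = {1..m}" by auto
      ultimately show ?thesis by simp
    qed
    have abL: "real (a + b) \<le> L"
    proof -
      have "4 * (a + b) + 2 * blocks2 P \<le> 3 * m" using cnt SY cardY by linarith
      hence "4 * real (a + b) + 2 * real (blocks2 P) \<le> 3 * real m" by linarith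
      thus ?thesis unfolding L_def by (subst pos_le_divide_eq) (simp, linarith)
    qed
    have wa: "w (restrict (cs P s) I) = (1 / real m) ^ a"
    proof -
      have "w (restrict (cs P s) I) = (\<Prod>i\<in>I. om m (cs P s i))"
        unfolding w_def by (rule prod.cong) auto
      thus ?thesis using prod_om[OF finI] a_def I_def by simp
    qed
    have wb: "w (restrict (ct s t) I) = (1 / real m) ^ b"
    proof -
      have "w (restrict (ct s t) I) = (\<Prod>i\<in>I. om m (ct s t i))"
        unfolding w_def by (rule prod.cong) auto
      thus ?thesis using prod_om[OF finI] b_def I_def by simp
    qed
    have "W (enc p) = (1 / real m) ^ (a + b)" using wa wb pst unfolding W_def enc_def by (simp add: power_add)
    also have "\<dots> = real m powr (- real (a + b))"
    proof -
      have "real m powr real (a+b) = real m ^ (a+b)" using m1 by (intro powr_realpow) simp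
      thus ?thesis by (metis powr_minus power_one_over inverse_eq_divide)
    qed
    finally have "W (enc p) = real m powr (- real (a + b))" .
    moreover have "real m powr (- L) \<le> real m powr (- real (a + b))"
      using m1 abL by (intro powr_mono) auto
    ultimately show ?thesis by simp
  qed
  have wnn: "0 \<le> W h" for h
    unfolding W_def w_def om_def by (auto intro!: mult_nonneg_nonneg prod_nonneg split: prod.splits)
  have "real (card Pairs) * real m powr (- L) = (\<Sum>p\<in>Pairs. real m powr (- L))" by simp
  also have "\<dots> \<le> (\<Sum>p\<in>Pairs. W (enc p))" by (rule sum_mono) (rule lower)
  also have "\<dots> = (\<Sum>h\<in>enc ` Pairs. W h)" using sum.reindex[OF inj, of W] by simp
  also have "\<dots> \<le> (\<Sum>h\<in>PiE I (\<lambda>_. V) \<times> PiE I (\<lambda>_. V). W h)"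
    by (rule sum_mono2) (use img wnn finI V_def in \<open>auto intro!: finite_PiE\<close>)
  also have "\<dots> = (\<Sum>h1\<in>PiE I (\<lambda>_. V). w h1) * (\<Sum>h2\<in>PiE I (\<lambda>_. V). w h2)"
    unfolding W_def sum_product sum.cartesian_product by simp
  also have "(\<Sum>h1\<in>PiE I (\<lambda>_. V). w h1) = (\<Prod>i\<in>I. \<Sum>v\<in>V. om m v)"
    unfolding w_def using prod_sum_PiE[OF finI, of "\<lambda>_. V" "\<lambda>_ v. om m v"] V_def by simp
  also have "\<dots> = (\<Sum>v\<in>V. om m v) ^ m" using I_def by simp
  finally have A: "real (card Pairs) * real m powr (- L) \<le> (\<Sum>v\<in>V. om m v) ^ m * (\<Sum>v\<in>V. om m v) ^ m" .
  have "(\<Sum>v\<in>V. om m v) ^ m \<le> 8 ^ m"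
    using sum_om[OF m1] V_def by (intro power_mono) (auto simp: om_def intro!: sum_nonneg)
  hence "(\<Sum>v\<in>V. om m v) ^ m * (\<Sum>v\<in>V. om m v) ^ m \<le> 8 ^ m * 8 ^ m"
    by (intro mult_mono) (auto simp: om_def V_def intro!: sum_nonneg zero_le_power)
  also have "(8::real) ^ m * 8 ^ m = 64 ^ m" by (simp add: power_mult_distrib[symmetric])
  finally have B: "real (card Pairs) * real m powr (- L) \<le> 64 ^ m" using A by linarith
  have pos: "0 < real m powr L" using m1 by simp
  have "real (card Pairs) = real (card Pairs) * real m powr (- L) * real m powr L"
    using m1 by (simp add: powr_minus field_simps)
  also have "\<dots> \<le> 64 ^ m * real m powr L" using B pos by (intro mult_right_mono) auto
  finally show ?thesis unfolding N2_def Pairs_def[symmetric] L_def .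
qed

end


lemma m_le_fact_root:
  assumes m1: "m \<ge> (1::nat)"
  shows "real m \<le> exp 1 * fact m powr (1 / real m)"
proof -
  have mp: "0 < real m" using m1 by simp
  have "real m = (real m powr real m) powr (1 / real m)" using mp by (simp add: powr_powr)
  also have "real m powr real m = real m ^ m" using mp by (simp add: powr_realpow)
  also have "(real m ^ m) powr (1 / real m) \<le> (exp (real m) * fact m) powr (1 / real m)"
    using pow_fact[of m] by (intro powr_mono2) auto
  also have "\<dots> = exp (real m) powr (1 / real m) * fact m powr (1 / real m)"
    by (rule powr_mult; simp)
  also have "exp (real m) powr (1 / real m) = exp 1" using mp by (simp add: powr_def)
  finally show ?thesis .
qed

theorem lemma5p3:
  shows "\<exists>C::real. C > 0 \<and> (\<forall>m::nat. \<forall>P. m \<ge> 1 \<longrightarrow> P \<in> part_le2 m \<longrightarrow>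
     real (N2 m P) \<le> C ^ m * (fact m) powr (3/4 - real (blocks2 P) / (2 * real m)))"
proof (intro exI[of _ "64 * exp 1"] conjI allI impI)
  show "(0::real) < 64 * exp 1" by simp
  fix m :: nat and P assume m1: "m \<ge> 1" and P: "P \<in> part_le2 m"
  interpret PL m P using P by unfold_locales
  define L where "L = (3 * real m - 2 * real (blocks2 P)) / 4"
  have mp: "0 < real m" using m1 by simp
  have k2: "real (2 * blocks2 P) \<le> real m" using cardYle by (simp only: of_nat_le_iff)
  have L0: "0 \<le> L" using k2 unfolding L_def by (intro divide_nonneg_pos) auto
  have Lm: "L \<le> real m" unfolding L_def by (subst pos_divide_le_eq) (simp, linarith)
  have N: "real (N2 m P) \<le> 64 ^ m * real m powr L" unfolding L_def using main_count[OF m1] .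
  have "real m powr L \<le> (exp 1 * fact m powr (1 / real m)) powr L"
    by (rule powr_mono2) (use L0 m_le_fact_root[OF m1] in auto)
  also have "\<dots> = exp 1 powr L * (fact m powr (1 / real m)) powr L"
    by (rule powr_mult; simp)
  also have "(fact m powr (1 / real m)) powr L = fact m powr (L / real m)"
    by (simp add: powr_powr)
  also have "exp 1 powr L = exp L" by (simp add: powr_def)
  also have "exp L \<le> exp 1 ^ m"
    using Lm by (simp add: exp_of_nat_mult[symmetric])
  also have "L / real m = 3/4 - real (blocks2 P) / (2 * real m)"
    unfolding L_def using mp by (simp add: field_simps)
  finally have R: "real m powr L \<le> exp 1 ^ m * fact m powr (3/4 - real (blocks2 P) / (2 * real m))"
    by (simp add: mult_right_mono)
  have R2: "64 ^ m * real m powr L \<le> 64 ^ m * (exp 1 ^ m * fact m powr (3/4 - real (blocks2 P) / (2 * real m)))"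
    using R by (rule mult_left_mono) simp
  have e: "(64 * exp 1) ^ m = (64::real) ^ m * exp 1 ^ m" by (simp add: power_mult_distrib)
  show "real (N2 m P) \<le> (64 * exp 1) ^ m * fact m powr (3/4 - real (blocks2 P) / (2 * real m))"
    unfolding e using order.trans[OF N R2] by (simp add: mult.assoc)
qed

end
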